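(* Let $q$ be a prime power, let $m,n\ge1$ with $\gcd(n,q^m-1)=1$. Let $l(x)=\sum_{v=0}^{m} b_v x^{q^v}\in\mathbb{F}_q[x]$ be such that its conventional $q$-associate $\bar l(x)=\sum_{v=0}^m b_v x^v$ is a primitive polynomial of degree $m$ over $\mathbb{F}_q$ with $\bar l(x)\neq x-1$. Let $f(x)$ be a monic irreducible polynomial of degree $n$ over $\mathbb{F}_q$. Let $R(x)$ be the remainder of $l(x)$ modulo $f(x)$, and let $\psi(x)=\sum_{u=0}^n\psi_u x^u\in\mathbb{F}_q[x]$ be the monic nonzero polynomial of least degree satisfying $$\sum_{u=0}^{n}\psi_u\,(R(x))^u\equiv 0\pmod{f(x)}.$$ Then $\psi(x)$ is an irreducible polynomial of degree $n$ over $\mathbb{F}_q$, and $F(x)=\psi(l(x))/f(x)$ is an irreducible polynomial of degree $n(q^m-1)$ over $\mathbb{F}_q$.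
   Context: A primitive polynomial of degree $m$ over $\mathbb{F}_q$ is a monic irreducible polynomial of degree $m$ whose roots are generators of the multiplicative group $\mathbb{F}_{q^m}^*$. *)

theory Defs
  imports "HOL-Computational_Algebra.Computational_Algebra" "HOL-Library.Cardinality"
begin

text \<open>A primitive polynomial of degree m: monic, irreducible, degree m, and its root
  (the class of x in 'a[x]/(p), a copy of F_{q^m}) generates the multiplicative
  group of F_{q^m}, i.e. x has multiplicative order q^m - 1 modulo p.\<close>

definition primitive_poly :: "nat \<Rightarrow> ('a::{finite,field}) poly \<Rightarrow> bool" where
  "primitive_poly m (p :: 'a poly) \<longleftrightarrow>
     lead_coeff p = 1 \<and> irreducible p \<and> degree p = m \<and>
     p dvd ([:0,1:] ^ (CARD('a) ^ m - 1) - 1) \<and>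
     (\<forall>k. 0 < k \<and> k < CARD('a) ^ m - 1 \<longrightarrow> \<not> p dvd ([:0,1:] ^ k - 1))"

definition lin_assoc :: "'a::{finite,field} poly \<Rightarrow> 'a poly" where
  "lin_assoc (p :: 'a poly) = (\<Sum>v\<le>degree p. monom (coeff p v) (CARD('a) ^ v))"

end

theory Submission
  imports Defs
begin


lemma ff_power_card:
  fixes x :: "'a::{finite,field}"
  shows "x ^ CARD('a) = x"
proof (cases "x = 0")
  case False
  have "x * (\<Prod>y\<in>UNIV-{0}. x * y) = x * x ^ (CARD('a) - 1) * \<Prod>(UNIV-{0::'a})"
    by (simp add: prod.distrib mult_ac)
  also have "x * x ^ (CARD('a) - 1) = x ^ Suc (CARD('a) - 1)"
    by (subst power_Suc) auto
  also have "Suc (CARD('a) - 1) = CARD('a)"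
    using finite_UNIV_card_ge_0[where ?'a = 'a] by simp
  also have "(\<Prod>y\<in>UNIV-{0}. x * y) = (\<Prod>y\<in>UNIV-{0::'a}. y)"
    by (rule prod.reindex_bij_witness[of _ "\<lambda>y. y / x" "\<lambda>y. x * y"]) (use False in auto)
  finally show ?thesis
    by simp
qed (use finite_UNIV_card_ge_0[where ?'a = 'a] in auto)

lemma ff_power_card_pow:
  fixes x :: "'a::{finite,field}"
  shows "x ^ (CARD('a) ^ j) = x"
  by (induction j) (simp_all add: ff_power_card power_mult[symmetric] mult.commute[of "CARD('a)"] power_mult)

lemma ff_CHAR_prime: "prime CHAR('a::{finite,field})"
  by (intro prime_CHAR_semidom finite_imp_CHAR_pos) simp

lemma ff_card_ge2: "CARD('a::{finite,field}) \<ge> 2"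
proof -
  have "card {0::'a, 1} \<le> CARD('a)" by (rule card_mono) auto
  thus ?thesis by simp
qed

lemma of_nat_mult_closed:
  fixes V :: "'a::{finite,field} set"
  assumes "0 \<in> V" "\<And>a b. a \<in> V \<Longrightarrow> b \<in> V \<Longrightarrow> a + b \<in> V" "v \<in> V"
  shows "of_nat i * v \<in> V"
  by (induction i) (auto simp: algebra_simps intro: assms)

lemma ff_card_prime_power: "\<exists>k. CARD('a::{finite,field}) = CHAR('a) ^ k"
proof -
  define p where "p = CHAR('a)"
  have pp: "prime p" unfolding p_def by (rule ff_CHAR_prime)
  hence p2: "p \<ge> 2" by (simp add: prime_ge_2_nat)
  have main: "\<And>V::'a set. 0 \<in> V \<Longrightarrow> (\<forall>a\<in>V. \<forall>b\<in>V. a + b \<in> V) \<Longrightarrow> (\<exists>k. card V = p ^ k) \<Longrightarrow> \<exists>k. CARD('a) = p ^ k"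
  proof -
    fix V :: "'a set"
    show "0 \<in> V \<Longrightarrow> (\<forall>a\<in>V. \<forall>b\<in>V. a + b \<in> V) \<Longrightarrow> (\<exists>k. card V = p ^ k) \<Longrightarrow> \<exists>k. CARD('a) = p ^ k"
    proof (induction "card (UNIV - V)" arbitrary: V rule: less_induct)
      case (less V)
      then obtain k where k: "card V = p ^ k" by blast
      show ?case
      proof (cases "V = UNIV")
        case True thus ?thesis using k by auto
      next
        case False
        then obtain x where x: "x \<notin> V" by auto
        have cl: "\<And>v i. v \<in> V \<Longrightarrow> of_nat i * v \<in> V"
          using of_nat_mult_closed[of V] less.prems by blast
        have neg: "\<And>v. v \<in> V \<Longrightarrow> - v \<in> V"
        proof -
          fix v assume v: "v \<in> V"
          have "of_nat (p - 1) * v + v = of_nat p * v"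
            using p2 by (simp add: algebra_simps of_nat_diff)
          also have "\<dots> = 0" unfolding p_def by simp
          finally have "- v = of_nat (p - 1) * v" by (simp add: neg_eq_iff_add_eq_0 add.commute)
          thus "- v \<in> V" using cl v by simp
        qed
        define V' where "V' = (\<lambda>(v, i). v + of_nat i * x) ` (V \<times> {..<p})"
        have inj: "inj_on (\<lambda>(v, i). v + of_nat i * x) (V \<times> {..<p})"
        proof (rule inj_onI, clarsimp)
          fix v i w j
          assume vw: "v \<in> V" "i < p" "w \<in> V" "j < p" "v + of_nat i * x = w + of_nat j * x"
          show "v = w \<and> i = j"
          proof (cases "i = j")
            case True thus ?thesis using vw by simp
          next
            case False
            have gen: "\<And>i j v w. v \<in> V \<Longrightarrow> w \<in> V \<Longrightarrow> i < p \<Longrightarrow> j < i \<Longrightarrow>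
                    v + of_nat i * x = w + of_nat j * x \<Longrightarrow> False"
            proof -
              fix i j v w assume a: "v \<in> V" "w \<in> V" "i < p" "j < i" "v + of_nat i * x = w + of_nat j * (x::'a)"
              define c :: 'a where "c = of_nat (i - j)"
              have cx: "c * x = w + - v" using a(4,5) unfolding c_def
                by (simp add: of_nat_diff algebra_simps)
              have cxV: "c * x \<in> V" unfolding cx using less.prems(2) a neg[of v] by blast
              have "c \<noteq> 0" unfolding c_def
              proof
                assume "of_nat (i - j) = (0::'a)"
                hence "p dvd (i - j)" unfolding p_def by (simp add: of_nat_eq_0_iff_char_dvd)
                moreover have "0 < i - j" "i - j < p" using a by auto
                ultimately show False by (simp add: nat_dvd_not_less)
              qed
              have "c ^ CARD('a) = c" by (rule ff_power_card)
              have q2: "CARD('a) = Suc (Suc (CARD('a) - 2))" using ff_card_ge2[where 'a='a] by simp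
              have "c ^ (CARD('a) - 2) * c * c = 1 * c"
                using \<open>c ^ CARD('a) = c\<close> q2 by (metis mult.commute mult_1 power_Suc)
              hence "c ^ (CARD('a) - 2) * c = 1" using \<open>c \<noteq> 0\<close> by simp
              hence "x = of_nat ((i - j) ^ (CARD('a) - 2)) * (c * x)"
                unfolding c_def by (simp add: mult.assoc[symmetric])
              thus False using cl[OF cxV] x by metis
            qed
            show ?thesis
            proof (cases "j < i")
              case True thus ?thesis using gen[of v w i j] vw by simp
            next
              case False
              hence "i < j" using \<open>i \<noteq> j\<close> by simp
              thus ?thesis using gen[of w v j i] vw by simp
            qed
          qed
        qed
        have cardV': "card V' = p ^ Suc k" unfolding V'_def
          using card_image[OF inj] by (simp add: card_cartesian_product k)
        have "0 \<in> V'" unfolding V'_def using less.prems(1) p2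
          by (auto intro!: image_eqI[of _ _ "(0, 0)"])
        moreover have "\<forall>a\<in>V'. \<forall>b\<in>V'. a + b \<in> V'"
        proof (clarsimp simp: V'_def)
          fix v i w j assume a: "v \<in> V" "i < p" "w \<in> V" "j < p"
          have "of_nat (i + j) = (of_nat ((i + j) mod p) :: 'a)"
          proof -
            have "of_nat (i + j) = (of_nat ((i + j) mod p + p * ((i+j) div p)) :: 'a)" by simp
            also have "\<dots> = of_nat ((i + j) mod p)" unfolding of_nat_add of_nat_mult p_def by simp
            finally show ?thesis .
          qed
          hence "v + of_nat i * x + (w + of_nat j * x) = (v + w) + of_nat ((i + j) mod p) * x"
            by (metis (no_types, lifting) add.assoc add.left_commute distrib_right of_nat_add)
          moreover have "v + w \<in> V" using less.prems(2) a by auto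
          moreover have "(i + j) mod p < p" using p2 by simp
          ultimately show "v + of_nat i * x + (w + of_nat j * x) \<in> (\<lambda>(v, i). v + of_nat i * x) ` (V \<times> {..<p})"
            by (auto intro!: image_eqI[of _ _ "(v + w, (i + j) mod p)"])
        qed
        moreover have "card (UNIV - V') < card (UNIV - V)"
        proof (rule psubset_card_mono)
          show "finite (UNIV - V)" by simp
          have "V \<subseteq> V'" unfolding V'_def using p2 by (auto intro!: image_eqI[of _ _ "(_, 0)"])
          moreover have "x \<in> V'" unfolding V'_def using p2 less.prems(1)
            by (auto intro!: image_eqI[of _ _ "(0, 1)"])
          ultimately show "UNIV - V' \<subset> UNIV - V" using x by auto
        qed
        ultimately show ?thesis using less.hyps[of V'] cardV' by blast
      qed
    qed
  qed
  show ?thesis unfolding p_def[symmetric] by (rule main[of "{0}"]) (auto intro: exI[of _ 0])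
qed




abbreviation (input) xp :: "'a::comm_ring_1 poly" where "xp \<equiv> [:0, 1:]"

lemma frob_add:
  fixes a b :: "'a::{finite,field} poly"
  shows "(a + b) ^ (CARD('a) ^ j) = a ^ (CARD('a) ^ j) + b ^ (CARD('a) ^ j)"
proof -
  obtain k where k: "CARD('a) = CHAR('a) ^ k" using ff_card_prime_power by blast
  have "CHAR('a poly) = CHAR('a)" by simp
  hence pr: "prime CHAR('a poly)" using ff_CHAR_prime[where 'a='a] by simp
  show ?thesis
    by (rule freshmans_dream'[OF pr]) (simp add: k power_mult[symmetric])
qed

lemma frob_sum:
  fixes f :: "'b \<Rightarrow> 'a::{finite,field} poly"
  shows "(sum f A) ^ (CARD('a) ^ j) = (\<Sum>i\<in>A. f i ^ (CARD('a) ^ j))"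
proof -
  obtain k where k: "CARD('a) = CHAR('a) ^ k" using ff_card_prime_power by blast
  have "CHAR('a poly) = CHAR('a)" by simp
  hence pr: "prime CHAR('a poly)" using ff_CHAR_prime[where 'a='a] by simp
  show ?thesis
    by (rule freshmans_dream_sum'[OF pr]) (simp add: k power_mult[symmetric])
qed

lemma frob_diff:
  fixes a b :: "'a::{finite,field} poly"
  shows "(a - b) ^ (CARD('a) ^ j) = a ^ (CARD('a) ^ j) - b ^ (CARD('a) ^ j)"
  using frob_add[of "a - b" b j] by (simp add: algebra_simps)

lemma frob_pcompose:
  fixes g :: "'a::{finite,field} poly"
  shows "g ^ (CARD('a) ^ j) = pcompose g (xp ^ (CARD('a) ^ j))"
proof (induction g rule: pCons_induct)
  case 0
  then show ?case by (simp add: power_0_left)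
next
  case (pCons c g)
  have e: "pCons c g = [:c:] + xp * g" by (simp add: pCons_eq_iff)
  have "[:c:] ^ (CARD('a) ^ j) = [:c ^ (CARD('a) ^ j):]" by (simp add: poly_const_pow)
  also have "\<dots> = [:c:]" by (simp add: ff_power_card_pow)
  finally have c: "[:c:] ^ (CARD('a) ^ j) = [:c:]" .
  show ?case
    apply (subst e)
    apply (simp only: frob_add c power_mult_distrib pCons.IH)
    apply (simp add: pcompose_pCons)
    done
qed

lemma pcompose_cong:
  fixes g :: "'a::comm_ring_1 poly"
  assumes "P dvd a - b"
  shows "P dvd pcompose g a - pcompose g b"
proof (induction g rule: pCons_induct)
  case 0
  then show ?case by simp
next
  case (pCons c g)
  have "pcompose (pCons c g) a - pcompose (pCons c g) b = a * (pcompose g a - pcompose g b) + (a - b) * pcompose g b"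
    by (simp add: pcompose_pCons algebra_simps)
  thus ?case using pCons.IH assms by simp
qed

lemma pcompose_dvd_right:
  fixes g :: "'a::comm_ring_1 poly"
  assumes "P dvd a - b" "P dvd pcompose g b"
  shows "P dvd pcompose g a"
  using pcompose_cong[OF assms(1), of g] assms(2) by (metis dvd_add minus_add_cancel add.commute diff_add_cancel)

lemma pcompose_dvd_mono:
  fixes g h u :: "'a::comm_ring_1 poly"
  assumes "g dvd h"
  shows "pcompose g u dvd pcompose h u"
  using assms by (auto simp: pcompose_mult elim!: dvdE)

lemma pcompose_power_left': "pcompose (p ^ k) u = (pcompose p u :: 'a::comm_ring_1 poly) ^ k"
  by (induction k) (simp_all add: pcompose_mult pcompose_1)

lemma pcompose_xp_power: "pcompose (xp ^ k) u = (u :: 'a::comm_ring_1 poly) ^ k"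
  by (simp add: pcompose_power_left' pcompose_pCons)




lemma La_sum:
  fixes p :: "'a::{finite,field} poly"
  assumes "degree p \<le> D"
  shows "lin_assoc p = (\<Sum>v\<le>D. monom (coeff p v) (CARD('a) ^ v))"
  unfolding lin_assoc_def
  by (rule sum.mono_neutral_left) (use assms in \<open>auto simp: coeff_eq_0\<close>)

lemma La_add: "lin_assoc (p + q) = lin_assoc p + lin_assoc (q :: 'a::{finite,field} poly)"
proof -
  define D where "D = max (degree p) (degree q)"
  have "degree (p + q) \<le> D" unfolding D_def by (rule degree_add_le) auto
  thus ?thesis
    using La_sum[of p D] La_sum[of q D] La_sum[of "p + q" D]
    by (simp add: D_def sum.distrib[symmetric] add_monom)
qed

lemma smult_sum2: "smult c (\<Sum>i\<in>S. f i) = (\<Sum>i\<in>S. smult c (f i))"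
  by (induction S rule: infinite_finite_induct) (simp_all add: smult_add_right)

lemma La_smult: "lin_assoc (smult c p) = smult c (lin_assoc (p :: 'a::{finite,field} poly))"
proof -
  have "degree (smult c p) \<le> degree p" by simp
  thus ?thesis using La_sum[of "smult c p" "degree p"]
    by (simp add: lin_assoc_def smult_monom smult_sum2)
qed

lemma La_minus: "lin_assoc (- p) = - lin_assoc (p :: 'a::{finite,field} poly)"
  using La_smult[of "-1" p] by simp

lemma La_diff: "lin_assoc (p - q) = lin_assoc p - lin_assoc (q :: 'a::{finite,field} poly)"
  using La_add[of p "-q"] La_minus[of q] by simp

lemma La_0 [simp]: "lin_assoc (0 :: 'a::{finite,field} poly) = 0"
  by (simp add: lin_assoc_def)

lemma La_const: "lin_assoc ([:c:] :: 'a::{finite,field} poly) = smult c xp"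
  by (simp add: lin_assoc_def monom_altdef)

lemma La_1: "lin_assoc (1 :: 'a::{finite,field} poly) = xp"
  using La_const[of "1::'a"] by (simp add: one_pCons)

lemma La_pCons0: "lin_assoc (pCons 0 g) = (lin_assoc (g :: 'a::{finite,field} poly)) ^ CARD('a)"
proof -
  have "(lin_assoc g) ^ (CARD('a) ^ 1) = (\<Sum>v\<le>degree g. (monom (coeff g v) (CARD('a) ^ v)) ^ (CARD('a) ^ 1))"
    unfolding lin_assoc_def by (rule frob_sum)
  also have "\<dots> = (\<Sum>v\<le>degree g. monom (coeff g v) (CARD('a) ^ Suc v))"
    by (simp add: monom_power ff_power_card mult.commute)
  also have "\<dots> = lin_assoc (pCons 0 g)"
  proof -
    have "degree (pCons 0 g) \<le> Suc (degree g)" by (simp add: degree_pCons_le)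
    hence "lin_assoc (pCons 0 g) = (\<Sum>v\<le>Suc (degree g). monom (coeff (pCons 0 g) v) (CARD('a) ^ v))"
      by (rule La_sum)
    also have "\<dots> = (\<Sum>v\<le>degree g. monom (coeff g v) (CARD('a) ^ Suc v))"
      by (subst sum.atMost_Suc_shift) simp
    finally show ?thesis by simp
  qed
  finally show ?thesis by simp
qed

lemma La_mult: "lin_assoc (g * h) = pcompose (lin_assoc g) (lin_assoc (h :: 'a::{finite,field} poly))"
proof (induction g rule: pCons_induct)
  case 0
  then show ?case by simp
next
  case (pCons c g)
  have e: "pCons c g = [:c:] + pCons 0 g" by simp
  show ?case
    by (simp add: La_add La_smult La_pCons0 pCons.IH e La_const pcompose_add pcompose_smult
                  pcompose_power_left' pcompose_pCons del: mult_pCons_left add_pCons)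
       (simp add: La_pCons0 La_add La_smult pCons.IH)
qed

lemma La_comp:
  "pcompose (lin_assoc g) u = (\<Sum>v\<le>degree g. smult (coeff g v) (u ^ (CARD('a) ^ v)))"
  for g u :: "'a::{finite,field} poly"
  unfolding lin_assoc_def by (simp add: pcompose_sum monom_altdef pcompose_smult pcompose_xp_power)

lemma La_comp_add:
  "pcompose (lin_assoc g) (a + b) = pcompose (lin_assoc g) a + pcompose (lin_assoc g) b"
  for g a b :: "'a::{finite,field} poly"
  unfolding La_comp by (simp add: frob_add smult_add_right sum.distrib)

lemma La_comp_diff:
  "pcompose (lin_assoc g) (a - b) = pcompose (lin_assoc g) a - pcompose (lin_assoc g) b"
  for g a b :: "'a::{finite,field} poly"
  using La_comp_add[of g "a - b" b] by (simp add: algebra_simps)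

lemma La_comp_dvd: "u dvd pcompose (lin_assoc g) (u :: 'a::{finite,field} poly)"
  unfolding La_comp
proof (intro dvd_sum dvd_smult)
  fix v
  have "0 < CARD('a) ^ v" by simp
  thus "u dvd u ^ CARD('a) ^ v" by (simp add: dvd_power)
qed

lemma La_comp_dvd': "P dvd u \<Longrightarrow> P dvd pcompose (lin_assoc g) (u :: 'a::{finite,field} poly)"
  using La_comp_dvd dvd_trans by blast

lemma La_xpow: "lin_assoc (xp ^ k) = (xp :: 'a::{finite,field} poly) ^ (CARD('a) ^ k)"
  by (induction k) (simp_all add: La_1 La_pCons0 power_mult[symmetric] mult.commute)





lemma card_deg_less:
  assumes "d > 0"
  shows "card {h :: 'a::{finite,field} poly. degree h < d} = CARD('a) ^ d"
    and "finite {h :: 'a::{finite,field} poly. degree h < d}"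
proof -
  define F where "F = (\<lambda>c. \<Sum>i<d. monom (c i) i :: 'a poly)"
  have coeffF: "coeff (F c) j = (if j < d then c j else 0)" for c j
    unfolding F_def by (simp add: coeff_sum coeff_monom)
  have inj: "inj_on F (PiE {..<d} (\<lambda>_. UNIV))"
  proof (rule inj_onI)
    fix c c' assume a: "c \<in> PiE {..<d} (\<lambda>_. UNIV)" "c' \<in> PiE {..<d} (\<lambda>_. UNIV)" "F c = F c'"
    show "c = c'"
    proof
      fix i show "c i = c' i"
      proof (cases "i < d")
        case True thus ?thesis using arg_cong[OF a(3), of "\<lambda>p. coeff p i"] by (simp add: coeffF)
      next
        case False thus ?thesis using a(1,2) by (auto simp: PiE_def extensional_def)
      qed
    qed
  qed
  have img: "F ` PiE {..<d} (\<lambda>_. UNIV) = {h. degree h < d}"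
  proof (intro equalityI subsetI)
    fix h assume "h \<in> F ` PiE {..<d} (\<lambda>_. UNIV)"
    then obtain c where h: "h = F c" by auto
    have "degree h \<le> d - 1" unfolding h
      by (rule degree_le) (use assms in \<open>auto simp: coeffF\<close>)
    thus "h \<in> {h. degree h < d}" using assms by simp
  next
    fix h :: "'a poly" assume "h \<in> {h. degree h < d}"
    hence hd: "degree h < d" by simp
    have "h = F (restrict (coeff h) {..<d})"
      by (rule poly_eqI) (use hd in \<open>auto simp: coeffF coeff_eq_0\<close>)
    thus "h \<in> F ` PiE {..<d} (\<lambda>_. UNIV)" by auto
  qed
  show "card {h :: 'a poly. degree h < d} = CARD('a) ^ d"
    unfolding img[symmetric] by (subst card_image[OF inj]) (simp add: card_PiE)
  show "finite {h :: 'a::{finite,field} poly. degree h < d}"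
    unfolding img[symmetric] by (intro finite_imageI finite_PiE) auto
qed


lemma root_count:
  fixes G :: "'a::field poly poly" and P :: "'a poly"
  assumes P: "prime_elem P" and lc: "\<not> P dvd lead_coeff G" and fin: "finite S"
    and dist: "\<forall>h\<in>S. \<forall>h'\<in>S. h \<noteq> h' \<longrightarrow> \<not> P dvd h - h'"
    and roots: "\<forall>h\<in>S. P dvd poly G h"
  shows "card S \<le> degree G"
  using lc fin dist roots
proof (induction "degree G" arbitrary: G S)
  case 0
  show ?case
  proof (cases "S = {}")
    case False
    then obtain h0 where "h0 \<in> S" by auto
    from 0 have "G = [:lead_coeff G:]" using degree_0_id[of G] by simp
    hence "poly G h0 = lead_coeff G" by (metis poly_pCons poly_0 mult_zero_right add_0_right)
    thus ?thesis using 0 \<open>h0 \<in> S\<close> by auto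
  qed simp
next
  case (Suc k)
  show ?case
  proof (cases "S = {}")
    case False
    then obtain h0 where h0: "h0 \<in> S" by auto
    define G1 where "G1 = synthetic_div G h0"
    have eq: "G = [:-h0, 1:] * G1 + [:poly G h0:]"
      unfolding G1_def by (rule synthetic_div_correct'[symmetric])
    have dG1: "degree G1 = k" unfolding G1_def using Suc.hyps(2) by (simp add: degree_synthetic_div)
    have "G1 \<noteq> 0"
    proof
      assume "G1 = 0"
      hence "G = [:poly G h0:]" using eq by simp
      hence "degree G = 0" by (metis degree_pCons_0)
      thus False using Suc.hyps(2) by simp
    qed
    have "lead_coeff G = lead_coeff ([:-h0, 1:] * G1)"
    proof -
      have "degree ([:-h0, 1:] * G1) = 1 + degree G1"
        by (subst degree_mult_eq) (use \<open>G1 \<noteq> 0\<close> in auto)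
      hence "degree [:poly G h0:] < degree ([:-h0, 1:] * G1)" by simp
      hence "lead_coeff ([:poly G h0:] + [:-h0, 1:] * G1) = lead_coeff ([:-h0, 1:] * G1)"
        by (rule lead_coeff_add_le)
      moreover have "[:poly G h0:] + [:-h0, 1:] * G1 = G" using eq by (simp only: add.commute)
      ultimately show ?thesis by (simp only:)
    qed
    moreover have "lead_coeff ([:-h0, 1:] * G1) = lead_coeff G1"
      by (simp only: lead_coeff_mult) simp
    ultimately have lc1: "lead_coeff G1 = lead_coeff G" by simp
    have "card (S - {h0}) \<le> degree G1"
    proof (rule Suc.hyps(1))
      show "k = degree G1" using dG1 by simp
      show "\<not> P dvd lead_coeff G1" using lc1 Suc.prems by simp
      show "finite (S - {h0})" using Suc.prems by simp
      show "\<forall>h\<in>S - {h0}. \<forall>h'\<in>S - {h0}. h \<noteq> h' \<longrightarrow> \<not> P dvd h - h'" using Suc.prems by blast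
      show "\<forall>h\<in>S - {h0}. P dvd poly G1 h"
      proof
        fix h assume h: "h \<in> S - {h0}"
        have "poly G h = (h - h0) * poly G1 h + poly G h0"
          by (subst eq) (simp add: algebra_simps)
        moreover have "P dvd poly G h" "P dvd poly G h0" using Suc.prems(4) h h0 by auto
        ultimately have "P dvd (h - h0) * poly G1 h"
          using dvd_diff[of P "poly G h" "poly G h0"] by simp
        moreover have "\<not> P dvd h - h0" using Suc.prems(3) h h0 by blast
        ultimately show "P dvd poly G1 h" using P by (simp add: prime_elem_dvd_mult_iff)
      qed
    qed
    hence "card S - 1 \<le> k" using h0 Suc.prems(2) dG1 by (simp add: card_Diff_singleton)
    thus ?thesis using Suc.hyps(2) by simp
  qed simp
qed


lemma prime_elem_dvd_prod_iff':
  assumes "prime_elem p" "finite A"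
  shows "p dvd prod f A \<longleftrightarrow> (\<exists>x\<in>A. p dvd f x)"
  using assms(2)
proof (induction A rule: finite_induct)
  case empty
  then show ?case using assms(1) by (simp add: prime_elem_not_unit)
next
  case (insert x F)
  then show ?case using assms(1) by (simp add: prime_elem_dvd_mult_iff)
qed

lemma irreducible_degree_pos:
  fixes P :: "'a::field poly"
  assumes "irreducible P"
  shows "degree P > 0"
proof -
  have P0: "P \<noteq> 0" and nu: "\<not> is_unit P" using assms by (auto simp: irreducible_def)
  show ?thesis
  proof (rule ccontr)
    assume "\<not> degree P > 0"
    hence "is_unit P" using is_unit_iff_degree[OF P0] by simp
    thus False using nu by simp
  qed
qed

lemma dvd_small_degree:
  fixes P h :: "'a::field poly"
  assumes "P dvd h" "degree h < degree P"
  shows "h = 0"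
proof (rule ccontr)
  assume "h \<noteq> 0"
  hence "degree P \<le> degree h" using dvd_imp_degree_le assms(1) by blast
  thus False using assms(2) by simp
qed


lemma X_degree:
  assumes "N \<ge> 2"
  shows "degree ((xp :: 'a::idom poly) ^ N - xp) = N" "lead_coeff ((xp :: 'a::idom poly) ^ N - xp) = 1"
proof -
  have d: "degree (- xp :: 'a poly) < degree ((xp :: 'a poly) ^ N)" using assms by (simp add: degree_power_eq)
  have e: "(xp :: 'a poly) ^ N - xp = xp ^ N + (- xp)" by (simp only: diff_conv_add_uminus)
  show "degree ((xp :: 'a::idom poly) ^ N - xp) = N"
    unfolding e degree_add_eq_left[OF d] by (simp add: degree_power_eq)
  have "lead_coeff ((- xp) + (xp :: 'a poly) ^ N) = lead_coeff ((xp :: 'a poly) ^ N)"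
    by (rule lead_coeff_add_le) (use d in simp)
  thus "lead_coeff ((xp :: 'a::idom poly) ^ N - xp) = 1"
    unfolding e by (simp add: add.commute lead_coeff_power)
qed




theorem ff_F1:
  fixes P :: "'a::{finite,field} poly"
  assumes irr: "irreducible P"
  shows "P dvd xp ^ (CARD('a) ^ degree P) - xp"
proof -
  define d where "d = degree P"
  have d0: "d > 0" unfolding d_def by (rule irreducible_degree_pos[OF irr])
  have pr: "prime_elem P" using field_poly_irreducible_imp_prime[OF irr] .
  have P0: "P \<noteq> 0" using irr by auto
  define Q where "Q = CARD('a) ^ d"
  have Q1: "Q \<ge> 1" unfolding Q_def by simp
  have split: "(xp :: 'a poly) ^ Q - xp = xp * (xp ^ (Q - 1) - 1)"
    using Q1 by (simp add: algebra_simps power_Suc[symmetric])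
  show ?thesis
  proof (cases "P dvd xp")
    case True
    thus ?thesis unfolding d_def[symmetric] Q_def[symmetric] split by (rule dvd_mult2)
  next
    case False
    define S where "S = {h :: 'a poly. degree h < d} - {0}"
    have finS: "finite S" unfolding S_def using card_deg_less(2)[OF d0, where 'a='a] by simp
    have cardS: "card S = Q - 1" unfolding S_def Q_def using card_deg_less[OF d0, where 'a='a] d0
      by (subst card_Diff_singleton) auto
    define phi where "phi = (\<lambda>h. (xp * h) mod P)"
    have notdvd: "\<not> P dvd h" if "h \<in> S" for h
      using that dvd_small_degree[of P h] unfolding S_def d_def by auto
    have sub: "phi ` S \<subseteq> S"
    proof
      fix y assume "y \<in> phi ` S"
      then obtain h where h: "h \<in> S" "y = phi h" by auto
      have "\<not> P dvd xp * h" using False notdvd[OF h(1)] prime_elem_dvd_mult_iff[OF pr, of xp h] by blast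
      hence "y \<noteq> 0" unfolding h phi_def by (simp add: mod_eq_0_iff_dvd)
      moreover have "degree y < d" unfolding h phi_def d_def using \<open>y \<noteq> 0\<close> P0
        by (metis degree_mod_less' h(2) phi_def)
      ultimately show "y \<in> S" unfolding S_def by simp
    qed
    have inj: "inj_on phi S"
    proof (rule inj_onI)
      fix a b assume ab: "a \<in> S" "b \<in> S" "phi a = phi b"
      hence "P dvd xp * a - xp * b" unfolding phi_def by (simp add: mod_eq_dvd_iff)
      hence "P dvd xp * (a - b)" by (simp add: algebra_simps)
      hence "P dvd a - b" using False prime_elem_dvd_mult_iff[OF pr, of xp "a - b"] by blast
      moreover have "degree (a - b) < degree P" using ab unfolding S_def d_def
        by (metis (no_types, lifting) DiffD1 degree_diff_le_max max_less_iff_conj mem_Collect_eq order.strict_trans1)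
      ultimately show "a = b" using dvd_small_degree by fastforce
    qed
    have im: "phi ` S = S" by (rule endo_inj_surj[OF finS sub inj])
    have "prod phi S = prod id S"
      using prod.reindex[OF inj, of id] im by simp
    hence "(\<Prod>h\<in>S. (xp * h) mod P) mod P = (\<Prod>h\<in>S. h) mod P" unfolding phi_def by simp
    hence "(\<Prod>h\<in>S. xp * h) mod P = (\<Prod>h\<in>S. h) mod P" by (simp add: mod_prod_eq)
    hence "P dvd (\<Prod>h\<in>S. xp * h) - (\<Prod>h\<in>S. h)" by (simp add: mod_eq_dvd_iff)
    moreover have "(\<Prod>h\<in>S. xp * h) = xp ^ card S * (\<Prod>h\<in>S. h)"
      by (simp only: prod.distrib prod_constant)
    ultimately have "P dvd (xp ^ card S - 1) * (\<Prod>h\<in>S. h)" by (simp only: left_diff_distrib mult_1)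
    moreover have "\<not> P dvd (\<Prod>h\<in>S. h)" using prime_elem_dvd_prod_iff'[OF pr finS] notdvd by auto
    ultimately have "P dvd xp ^ card S - 1" using prime_elem_dvd_mult_iff[OF pr] by blast
    hence "P dvd xp ^ (Q - 1) - 1" using cardS by simp
    thus ?thesis unfolding d_def[symmetric] Q_def[symmetric] split by (rule dvd_mult)
  qed
qed




lemma aux_sub: "(a::'b::ab_group_add) - b - (a - c) = c - b" by simp

lemma X_sub:
  fixes P :: "'a::{finite,field} poly"
  assumes "P dvd xp ^ (CARD('a) ^ j) - xp" "P dvd xp ^ (CARD('a) ^ k) - xp" "j \<le> k"
  shows "P dvd xp ^ (CARD('a) ^ (k - j)) - xp"
proof -
  have "(xp :: 'a poly) ^ (CARD('a) ^ k) = (xp ^ (CARD('a) ^ (k - j))) ^ (CARD('a) ^ j)"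
    using assms(3) by (simp add: power_mult[symmetric] power_add[symmetric])
  also have "\<dots> = pcompose (xp ^ (CARD('a) ^ (k - j))) (xp ^ (CARD('a) ^ j))" by (rule frob_pcompose)
  finally have e: "(xp :: 'a poly) ^ (CARD('a) ^ k) = \<dots>" .
  have "P dvd pcompose (xp ^ (CARD('a) ^ (k - j))) (xp ^ (CARD('a) ^ j)) - pcompose (xp ^ (CARD('a) ^ (k - j))) xp"
    by (rule pcompose_cong[OF assms(1)])
  hence "P dvd xp ^ (CARD('a) ^ k) - xp ^ (CARD('a) ^ (k - j))" by (simp add: e)
  from dvd_diff[OF assms(2) this] show ?thesis by (simp only: aux_sub)
qed

lemma X_all_roots:
  fixes P :: "'a::{finite,field} poly"
  assumes "P dvd xp ^ (CARD('a) ^ j) - xp"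
  shows "P dvd h ^ (CARD('a) ^ j) - h"
  using pcompose_cong[OF assms, of h] by (subst frob_pcompose) simp

theorem ff_F2:
  fixes P :: "'a::{finite,field} poly"
  assumes irr: "irreducible P" and dv: "P dvd xp ^ (CARD('a) ^ k) - xp"
  shows "degree P dvd k"
proof -
  define d where "d = degree P"
  have d0: "d > 0" unfolding d_def by (rule irreducible_degree_pos[OF irr])
  have pr: "prime_elem P" using field_poly_irreducible_imp_prime[OF irr] .
  have Xd: "P dvd xp ^ (CARD('a) ^ d) - xp" unfolding d_def by (rule ff_F1[OF irr])
  have red: "P dvd xp ^ (CARD('a) ^ (k mod d)) - xp" using dv
  proof (induction k rule: less_induct)
    case (less k)
    show ?case
    proof (cases "k < d")
      case True thus ?thesis using less.prems by simp
    next
      case False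
      have "P dvd xp ^ (CARD('a) ^ (k - d)) - xp" by (rule X_sub[OF Xd less.prems]) (use False in simp)
      hence "P dvd xp ^ (CARD('a) ^ ((k - d) mod d)) - xp" by (rule less.IH[rotated]) (use d0 False in simp)
      moreover have "(k - d) mod d = k mod d" using False by (simp add: le_mod_geq)
      ultimately show ?thesis by simp
    qed
  qed
  show ?thesis
  proof (rule ccontr)
    assume "\<not> degree P dvd k"
    hence "\<not> d dvd k" unfolding d_def .
    define r where "r = k mod d"
    have r0: "r > 0" "r < d" unfolding r_def using \<open>\<not> d dvd k\<close> d0 by (auto simp: dvd_eq_mod_eq_0 gr0I)
    have q2: "CARD('a) \<ge> 2" by (rule ff_card_ge2)
    have N2: "CARD('a) ^ r \<ge> 2"
      proof -
      have "CARD('a) ^ 1 \<le> CARD('a) ^ r" by (rule power_increasing) (use r0 q2 in auto)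
      thus ?thesis using q2 by simp
    qed
    define G :: "'a poly poly" where "G = xp ^ (CARD('a) ^ r) - xp"
    have "card {h :: 'a poly. degree h < d} \<le> degree G"
    proof (rule root_count[OF pr])
      have "lead_coeff G = 1" unfolding G_def by (rule X_degree(2)[OF N2])
      thus "\<not> P dvd lead_coeff G" using irr by (simp add: irreducible_def)
      show "finite {h :: 'a poly. degree h < d}" by (rule card_deg_less(2)[OF d0, where 'a='a])
      show "\<forall>h\<in>{h. degree h < d}. \<forall>h'\<in>{h. degree h < d}. h \<noteq> h' \<longrightarrow> \<not> P dvd h - h'"
      proof (intro ballI impI notI)
        fix h h' :: "'a poly" assume a: "h \<in> {h. degree h < d}" "h' \<in> {h. degree h < d}" "h \<noteq> h'" "P dvd h - h'"
        have "degree (h - h') \<le> max (degree h) (degree h')" by (rule degree_diff_le_max)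
        hence "degree (h - h') < degree P" using a(1,2) unfolding d_def by simp
        thus False using dvd_small_degree[OF a(4)] a(3) by simp
      qed
      show "\<forall>h\<in>{h. degree h < d}. P dvd poly G h"
        using X_all_roots[OF red[folded r_def]] unfolding G_def by simp
    qed
    hence "CARD('a) ^ d \<le> CARD('a) ^ r" using card_deg_less(1)[OF d0, where 'a='a] X_degree(1)[OF N2, where 'a="'a poly"] unfolding G_def by simp
    moreover have "CARD('a) ^ r < CARD('a) ^ d" using q2 r0 by (intro power_strict_increasing) auto
    ultimately show False by simp
  qed
qed




lemma ff_bez:
  fixes P h :: "'a::{finite,field} poly"
  assumes irr: "irreducible P" and nd: "\<not> P dvd h"
  shows "\<exists>a b. a * P + b * h = 1"
proof -
  define d where "d = degree P"
  have pr: "prime_elem P" using field_poly_irreducible_imp_prime[OF irr] .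
  have Xd: "P dvd xp ^ (CARD('a) ^ d) - xp" unfolding d_def by (rule ff_F1[OF irr])
  have "P dvd h ^ (CARD('a) ^ d) - h" by (rule X_all_roots[OF Xd])
  moreover have Q1: "CARD('a) ^ d \<ge> 1" by simp
  hence "h ^ (CARD('a) ^ d) - h = h * (h ^ (CARD('a) ^ d - 1) - 1)"
    by (simp add: algebra_simps power_Suc[symmetric] del: power_Suc)
  ultimately have "P dvd h * (h ^ (CARD('a) ^ d - 1) - 1)" by simp
  hence "P dvd h ^ (CARD('a) ^ d - 1) - 1" using nd prime_elem_dvd_mult_iff[OF pr] by blast
  then obtain c where c: "h ^ (CARD('a) ^ d - 1) - 1 = P * c" by (elim dvdE)
  have q2: "CARD('a) ^ d - 1 \<ge> 1"
  proof -
    have "d > 0" unfolding d_def by (rule irreducible_degree_pos[OF irr])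
    hence "CARD('a) ^ 1 \<le> CARD('a) ^ d" by (intro power_increasing) auto
    thus ?thesis using ff_card_ge2[where 'a='a] by simp
  qed
  have "h ^ (CARD('a) ^ d - 1) = h ^ (CARD('a) ^ d - 2) * h"
  proof -
    have "CARD('a) ^ d - 1 = Suc (CARD('a) ^ d - 2)" using q2 by simp
    thus ?thesis by (simp add: mult.commute)
  qed
  hence "(- c) * P + h ^ (CARD('a) ^ d - 2) * h = 1" using c by (simp add: algebra_simps)
  thus ?thesis by blast
qed

lemma irreducible_factor_exists:
  fixes p :: "'a::field poly"
  assumes "p \<noteq> 0" "\<not> is_unit p"
  shows "\<exists>P. irreducible P \<and> P dvd p"
  using assms
proof (induction "degree p" arbitrary: p rule: less_induct)
  case (less p)
  show ?case
  proof (cases "irreducible p")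
    case True thus ?thesis using dvd_refl by blast
  next
    case False
    then obtain a b where ab: "p = a * b" "\<not> is_unit a" "\<not> is_unit b"
      using less.prems by (auto simp: irreducible_def)
    have a0: "a \<noteq> 0" "b \<noteq> 0" using ab less.prems by auto
    have "degree b > 0" using ab(3) a0 is_unit_iff_degree by blast
    hence "degree a < degree p" using ab(1) a0 by (simp add: degree_mult_eq)
    then obtain P where "irreducible P" "P dvd a" using less.hyps[of a] a0 ab(2) by blast
    thus ?thesis using ab(1) by (meson dvd_mult2)
  qed
qed

lemma La_xpow_minus1:
  "lin_assoc (xp ^ k - 1) = (xp :: 'a::{finite,field} poly) ^ (CARD('a) ^ k) - xp"
  by (simp add: La_diff La_xpow La_1)

lemma ker_lemma:
  fixes lbar w P g :: "'a::{finite,field} poly"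
  assumes irr: "irreducible lbar" and nd: "\<not> lbar dvd w"
    and d1: "P dvd pcompose (lin_assoc lbar) g" and d2: "P dvd pcompose (lin_assoc w) g"
  shows "P dvd g"
proof -
  obtain a b where ab: "a * lbar + b * w = 1" using ff_bez[OF irr nd] by blast
  have "xp = lin_assoc (a * lbar + b * w)" unfolding ab by (rule La_1[symmetric])
  also have "\<dots> = pcompose (lin_assoc a) (lin_assoc lbar) + pcompose (lin_assoc b) (lin_assoc w)"
    by (simp add: La_add La_mult)
  finally have e: "xp = \<dots>" .
  have "g = pcompose xp g" by (simp add: pcompose_pCons)
  also have "\<dots> = pcompose (lin_assoc a) (pcompose (lin_assoc lbar) g) + pcompose (lin_assoc b) (pcompose (lin_assoc w) g)"
    by (subst e) (simp add: pcompose_add pcompose_assoc)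
  finally have "g = \<dots>" .
  moreover have "P dvd pcompose (lin_assoc a) (pcompose (lin_assoc lbar) g)" by (rule La_comp_dvd'[OF d1])
  moreover have "P dvd pcompose (lin_assoc b) (pcompose (lin_assoc w) g)" by (rule La_comp_dvd'[OF d2])
  ultimately show ?thesis by (metis dvd_add)
qed

lemma sub1_dvd_power_sub1: "(a - 1) dvd (a :: 'a::comm_ring_1) ^ t - 1"
proof (induction t)
  case (Suc t)
  have "a ^ Suc t - 1 = a * (a ^ t - 1) + (a - 1)" by (simp add: algebra_simps)
  moreover have "a - 1 dvd a * (a ^ t - 1) + (a - 1)" using Suc by (intro dvd_add dvd_mult) auto
  ultimately show ?case by (simp only:)
qed simp

lemma sq_dvd_pderiv:
  fixes f T :: "'a::idom poly"
  assumes "f * f dvd T"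
  shows "f dvd pderiv T"
proof -
  obtain c where "T = f * f * c" using assms by (elim dvdE)
  hence c: "T = f * (f * c)" by (simp add: mult.assoc)
  have "pderiv T = f * pderiv (f * c) + (f * c) * pderiv f" unfolding c by (rule pderiv_mult)
  thus ?thesis by simp
qed

lemma of_nat_card_ff: "of_nat CARD('a::{finite,field}) = (0 :: 'a)"
proof -
  obtain k where k: "CARD('a) = CHAR('a) ^ k" using ff_card_prime_power by blast
  have "k \<noteq> 0" using k ff_card_ge2[where 'a='a] by (cases k) auto
  thus ?thesis unfolding k by (simp add: of_nat_power)
qed




lemma XL_comm:
  fixes lbar u :: "'a::{finite,field} poly"
  shows "pcompose (xp ^ (CARD('a) ^ k) - xp) (lin_assoc lbar) = pcompose (lin_assoc lbar) (xp ^ (CARD('a) ^ k) - xp)"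
proof -
  have "pcompose (xp ^ (CARD('a) ^ k) - xp) (lin_assoc lbar) = (lin_assoc lbar) ^ (CARD('a) ^ k) - lin_assoc lbar"
    by (simp add: pcompose_diff pcompose_xp_power pcompose_pCons)
  also have "\<dots> = pcompose (lin_assoc lbar) (xp ^ (CARD('a) ^ k)) - pcompose (lin_assoc lbar) xp"
    by (subst frob_pcompose) simp
  also have "\<dots> = pcompose (lin_assoc lbar) (xp ^ (CARD('a) ^ k) - xp)"
    by (rule La_comp_diff[symmetric])
  finally show ?thesis .
qed

lemma comp_Xpow_minus:
  fixes u :: "'a::{finite,field} poly"
  shows "pcompose (lin_assoc (xp ^ k - 1)) u = u ^ (CARD('a) ^ k) - u"
  by (simp add: La_xpow_minus1 pcompose_diff pcompose_xp_power pcompose_pCons)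

lemma lin_assoc_degree:
  fixes lbar :: "'a::{finite,field} poly"
  assumes "lead_coeff lbar = 1" "degree lbar = m"
  shows "degree (lin_assoc lbar) = CARD('a) ^ m"
proof -
  have q2: "CARD('a) \<ge> 2" by (rule ff_card_ge2)
  have l: "lin_assoc lbar = (\<Sum>v\<le>m. monom (coeff lbar v) (CARD('a) ^ v))"
    unfolding lin_assoc_def assms(2) ..
  have "degree (lin_assoc lbar) \<le> CARD('a) ^ m" unfolding l
  proof (rule degree_sum_le)
    fix v assume "v \<in> {..m}"
    hence "CARD('a) ^ v \<le> CARD('a) ^ m" using q2 by (intro power_increasing) auto
    thus "degree (monom (coeff lbar v) (CARD('a) ^ v)) \<le> CARD('a) ^ m"
      using degree_monom_le order.trans by blast
  qed simp
  moreover have "coeff (lin_assoc lbar) (CARD('a) ^ m) = 1"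
  proof -
    have "coeff (lin_assoc lbar) (CARD('a) ^ m) = (\<Sum>v\<le>m. if CARD('a) ^ v = CARD('a) ^ m then coeff lbar v else 0)"
      unfolding l by (simp add: coeff_sum coeff_monom)
    also have "\<dots> = (\<Sum>v\<le>m. if v = m then coeff lbar v else 0)"
      using q2 by (intro sum.cong refl) (auto simp: power_inject_exp)
    also have "\<dots> = coeff lbar m" by simp
    finally show ?thesis using assms by simp
  qed
  ultimately show ?thesis using le_degree[of "lin_assoc lbar" "CARD('a) ^ m"] by fastforce
qed

lemma pderiv_sum': "pderiv (sum f A) = (\<Sum>i\<in>A. pderiv (f i))"
  by (induction A rule: infinite_finite_induct) (simp_all add: pderiv_add)

lemma pderiv_lin_assoc:
  fixes lbar :: "'a::{finite,field} poly"
  shows "pderiv (lin_assoc lbar) = [:coeff lbar 0:]"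
proof -
  have "pderiv (lin_assoc lbar) = (\<Sum>v\<le>degree lbar. pderiv (monom (coeff lbar v) (CARD('a) ^ v)))"
    unfolding lin_assoc_def by (rule pderiv_sum')
  also have "\<dots> = (\<Sum>v\<le>degree lbar. if v = 0 then [:coeff lbar 0:] else 0)"
  proof (intro sum.cong refl)
    fix v
    show "pderiv (monom (coeff lbar v) (CARD('a) ^ v)) = (if v = 0 then [:coeff lbar 0:] else 0)"
    proof (cases v)
      case 0 thus ?thesis by (simp add: pderiv_monom monom_0)
    next
      case (Suc w)
      have "of_nat (CARD('a) ^ v) = (0::'a)" unfolding Suc by (simp add: of_nat_card_ff)
      thus ?thesis using Suc by (simp add: pderiv_monom)
    qed
  qed
  also have "\<dots> = [:coeff lbar 0:]" by simp
  finally show ?thesis .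
qed


theorem mainTheorem6:
  fixes lbar f psi :: "'a::{finite,field} poly" and m n :: nat
  defines "q \<equiv> CARD('a)"
  defines "l \<equiv> lin_assoc lbar"
  defines "R \<equiv> l mod f"
  assumes "m \<ge> 1" and "n \<ge> 1"
    and "coprime n (q ^ m - 1)"
    and "primitive_poly m lbar"
    and "lbar \<noteq> [:-1, 1:]"
    and "lead_coeff f = 1" and "irreducible f" and "degree f = n"
    and "lead_coeff psi = 1"
    and "f dvd pcompose psi R"
    and "\<And>g. g \<noteq> 0 \<Longrightarrow> f dvd pcompose g R \<Longrightarrow> degree psi \<le> degree g"
  shows "irreducible psi \<and> degree psi = n \<and>
         f dvd pcompose psi l \<and>
         irreducible (pcompose psi l div f) \<and>
         degree (pcompose psi l div f) = n * (q ^ m - 1)"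
proof -
  note m1 = assms(4) and n1 = assms(5) and cop = assms(6) and prim = assms(7) and lne = assms(8)
  note flc = assms(9) and firr = assms(10) and fdeg = assms(11) and psilc = assms(12)
  note fpsiR = assms(13) and minimal = assms(14)
  define N where "N = q ^ m - 1"
  have q2: "q \<ge> 2" unfolding q_def by (rule ff_card_ge2)
  have lbarlc: "lead_coeff lbar = 1" and irrl: "irreducible lbar" and degl: "degree lbar = m"
    and dvdN: "lbar dvd xp ^ N - 1" and noless: "\<And>k. 0 < k \<Longrightarrow> k < N \<Longrightarrow> \<not> lbar dvd xp ^ k - 1"
    using prim unfolding primitive_poly_def N_def q_def by auto
  have qm2: "q ^ m \<ge> 2"
  proof -
    have "q ^ 1 \<le> q ^ m" using q2 m1 by (intro power_increasing) auto
    thus ?thesis using q2 by simp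
  qed
  hence N1: "N \<ge> 1" unfolding N_def by simp
  have f0: "f \<noteq> 0" using firr by auto
  have fpr: "prime_elem f" by (rule field_poly_irreducible_imp_prime[OF firr])
  have fnu: "\<not> is_unit f" using firr by (auto simp: irreducible_def)
  have psi0: "psi \<noteq> 0" using psilc by auto

  have ordlem: "N dvd k" if "lbar dvd xp ^ k - 1" for k
  proof -
    have e: "(xp :: 'a poly) ^ k - 1 = xp ^ (k mod N) * ((xp ^ N) ^ (k div N) - 1) + (xp ^ (k mod N) - 1)"
    proof -
      have "(xp :: 'a poly) ^ k = xp ^ (k mod N) * (xp ^ N) ^ (k div N)"
        by (metis div_mult_mod_eq mult.commute power_add power_mult)
      thus ?thesis by (simp add: algebra_simps)
    qed
    have "lbar dvd (xp ^ N) ^ (k div N) - 1"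
      using dvdN sub1_dvd_power_sub1[of "xp ^ N" "k div N"] dvd_trans by blast
    hence "lbar dvd xp ^ (k mod N) * ((xp ^ N) ^ (k div N) - 1)" by simp
    hence "lbar dvd xp ^ (k mod N) - 1" using that unfolding e by (metis dvd_add_right_iff)
    moreover have "k mod N < N" using N1 by simp
    ultimately have "k mod N = 0" using noless by (metis gr0I)
    thus ?thesis by (simp add: dvd_eq_mod_eq_0)
  qed
  have N2: "N \<ge> 2"
  proof (rule ccontr)
    assume "\<not> N \<ge> 2"
    hence "N = 1" using N1 by simp
    hence "lbar dvd [:-1, 1:]" using dvdN by (simp add: one_pCons)
    then obtain c where c: "[:-1, 1:] = lbar * c" by (elim dvdE)
    have l0: "lbar \<noteq> 0" using lbarlc by auto
    have c0: "c \<noteq> 0" using c by auto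
    have "degree lbar = 1"
    proof -
      have "q ^ m = 2" using \<open>N = 1\<close> unfolding N_def by simp
      moreover have "m \<noteq> 1 \<Longrightarrow> q ^ m \<ge> 4"
      proof -
        assume "m \<noteq> 1" hence "m \<ge> 2" using m1 by simp
        hence "q ^ 2 \<le> q ^ m" using q2 by (intro power_increasing) auto
        moreover have "q ^ 2 \<ge> 2 ^ 2" using q2 by (intro power_mono) auto
        ultimately show "q ^ m \<ge> 4" by simp
      qed
      ultimately have "m = 1" by fastforce
      thus ?thesis using degl by simp
    qed
    have "degree [:-1, 1::'a:] = degree lbar + degree c" unfolding c by (rule degree_mult_eq[OF l0 c0])
    hence "degree c = 0" using \<open>degree lbar = 1\<close> by simp
    moreover have "lead_coeff c = 1"
      using arg_cong[OF c, of lead_coeff] lbarlc by (simp add: lead_coeff_mult)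
    ultimately have "c = 1" by (metis degree_0_id one_pCons)
    thus False using c lne by simp
  qed
  have ndn: "\<not> lbar dvd xp ^ n - 1"
  proof
    assume "lbar dvd xp ^ n - 1"
    hence "N dvd n" by (rule ordlem)
    hence "N = 1" using cop unfolding N_def[symmetric] by (metis coprime_common_divisor_nat dvd_refl)
    thus False using N2 by simp
  qed
  have b0: "coeff lbar 0 \<noteq> 0"
  proof
    assume "coeff lbar 0 = 0"
    hence "poly lbar (- 0) = 0" by (simp add: poly_0_coeff_0)
    hence "[:0, 1:] dvd lbar" using dvd_iff_poly_eq_0[of 0 lbar] by simp
    hence "[:0, 1:] dvd (xp :: 'a poly) ^ N - 1" using dvdN by (rule dvd_trans)
    hence "(0::'a) ^ N = 1" using dvd_iff_poly_eq_0[of "0::'a" "xp ^ N - 1"] by simp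
    thus False using N1 by (simp add: power_0_left)
  qed
  have degLa: "degree l = q ^ m" unfolding l_def q_def by (rule lin_assoc_degree[OF lbarlc degl])
  have dl: "pderiv l = [:coeff lbar 0:]" unfolding l_def by (rule pderiv_lin_assoc)

  have fl_R: "f dvd l - R" unfolding R_def by (simp add: minus_mod_eq_mult_div)
  have lR: "f dvd pcompose g l \<longleftrightarrow> f dvd pcompose g R" for g
    using pcompose_dvd_right[OF fl_R, of g] pcompose_dvd_right[of f R l g] fl_R
    by (metis dvd_minus_iff minus_diff_eq)
  have fpsil: "f dvd pcompose psi l" using fpsiR lR by simp
  have A2: "psi dvd g" if "f dvd pcompose g l" for g
  proof -
    define r where "r = g mod psi"
    have "g = g div psi * psi + r" unfolding r_def by simp
    hence "pcompose g l = pcompose (g div psi) l * pcompose psi l + pcompose r l"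
      by (metis pcompose_add pcompose_mult)
    hence "f dvd pcompose r l" using that fpsil by (metis dvd_add_right_iff dvd_mult)
    hence "f dvd pcompose r R" using lR by simp
    have "r = 0"
    proof (rule ccontr)
      assume "r \<noteq> 0"
      hence "degree psi \<le> degree r" using minimal \<open>f dvd pcompose r R\<close> by blast
      moreover have "degree r < degree psi" unfolding r_def using psi0 \<open>r \<noteq> 0\<close> r_def by (metis degree_mod_less')
      ultimately show False by simp
    qed
    thus ?thesis unfolding r_def by (simp add: mod_eq_0_iff_dvd)
  qed
  have psi_irr: "irreducible psi"
  proof (rule irreducibleI)
    show "psi \<noteq> 0" by (rule psi0)
    show "\<not> psi dvd 1"
    proof
      assume "psi dvd 1"
      hence "degree psi = 0" using psi0 is_unit_iff_degree by blast
      hence "psi = 1" using psilc by (metis degree_0_id one_pCons)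
      hence "f dvd 1" using fpsil by (simp add: pcompose_1)
      thus False using fnu by simp
    qed
    fix a b assume ab: "psi = a * b"
    have "f dvd pcompose a l * pcompose b l" using fpsil ab by (simp add: pcompose_mult)
    hence "f dvd pcompose a l \<or> f dvd pcompose b l" using fpr prime_elem_dvd_mult_iff by blast
    hence "psi dvd a \<or> psi dvd b" using A2 by blast
    thus "a dvd 1 \<or> b dvd 1"
    proof
      assume "psi dvd a"
      then obtain c where "a = psi * c" by (elim dvdE)
      hence "psi * 1 = psi * (c * b)" using ab by (metis mult.assoc mult_1_right)
      hence "c * b = 1" using psi0 by (metis mult_left_cancel)
      thus ?thesis by (metis dvd_triv_right)
    next
      assume "psi dvd b"
      then obtain c where "b = psi * c" by (elim dvdE)
      hence "psi * 1 = psi * (c * a)" using ab by (metis mult.assoc mult.commute mult_1_right)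
      hence "c * a = 1" using psi0 by (metis mult_left_cancel)
      thus ?thesis by (metis dvd_triv_right)
    qed
  qed
  define Xn where "Xn = (xp :: 'a poly) ^ (q ^ n) - xp"
  have fXn: "f dvd Xn" unfolding Xn_def q_def using ff_F1[OF firr] fdeg by simp
  have Xnl: "pcompose Xn l = pcompose l Xn" unfolding Xn_def l_def q_def by (rule XL_comm)
  have flXn: "f dvd pcompose l Xn" unfolding l_def by (rule La_comp_dvd'[OF fXn])
  have psiXn: "psi dvd Xn"
    by (rule A2) (unfold Xnl, rule flXn)
  define e where "e = degree psi"
  have e_n: "e dvd n" unfolding e_def using ff_F2[OF psi_irr] psiXn unfolding Xn_def q_def by blast
  have psiXe: "psi dvd xp ^ (q ^ e) - xp" unfolding e_def q_def by (rule ff_F1[OF psi_irr])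
  have "f dvd pcompose (xp ^ (q ^ e) - xp) l"
    using fpsil pcompose_dvd_mono[OF psiXe, of l] dvd_trans by blast
  hence "f dvd pcompose l (xp ^ (q ^ e) - xp)" unfolding l_def q_def by (simp add: XL_comm)
  hence "f dvd xp ^ (q ^ e) - xp"
  proof (rule ker_lemma[OF irrl ndn, folded l_def])
    show "f dvd pcompose (lin_assoc (xp ^ n - 1)) (xp ^ q ^ e - xp)"
      unfolding comp_Xpow_minus q_def by (rule X_all_roots) (use fXn in \<open>simp add: Xn_def q_def\<close>)
  qed
  hence "n dvd e" using ff_F2[OF firr] fdeg unfolding q_def by blast
  hence psideg: "degree psi = n" using e_n unfolding e_def by (simp add: dvd_antisym)

  define F where "F = pcompose psi l div f"
  have FF: "pcompose psi l = F * f" unfolding F_def using fpsil by simp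
  have dpl: "degree (pcompose psi l) = n * q ^ m" by (simp add: degree_pcompose psideg degLa)
  have psil0: "pcompose psi l \<noteq> 0"
  proof
    assume "pcompose psi l = 0"
    hence "n * q ^ m = 0" using dpl by simp
    thus False using n1 q2 by simp
  qed
  have F0: "F \<noteq> 0" using FF psil0 by auto
  have degF: "degree F = n * N"
  proof -
    have "degree (pcompose psi l) = degree F + n" using FF F0 f0 fdeg by (simp add: degree_mult_eq)
    thus ?thesis unfolding N_def using dpl by (simp add: diff_mult_distrib2)
  qed
  have B3: "\<not> f * f dvd pcompose psi l"
  proof
    assume a: "f * f dvd pcompose psi l"
    have "pcompose psi l dvd pcompose Xn l" by (rule pcompose_dvd_mono[OF psiXn])
    hence "f * f dvd pcompose Xn l" using a dvd_trans by blast
    hence "f dvd pderiv (pcompose Xn l)" by (rule sq_dvd_pderiv)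
    moreover have "pderiv (pcompose Xn l) = - [:coeff lbar 0:]"
    proof -
      have "pcompose Xn l = l ^ (q ^ n) - l" unfolding Xn_def by (simp add: pcompose_diff pcompose_xp_power pcompose_pCons)
      hence "pderiv (pcompose Xn l) = pderiv (l ^ (q ^ n)) - pderiv l" by (simp add: pderiv_diff)
      moreover have "pderiv (l ^ (q ^ n)) = 0"
      proof -
        have "of_nat (q ^ n) = (0::'a)" using n1 unfolding q_def
          by (cases n) (simp_all add: of_nat_card_ff)
        thus ?thesis by (simp add: pderiv_power)
      qed
      ultimately show ?thesis using dl by simp
    qed
    ultimately have "f dvd [:- coeff lbar 0:]" by simp
    moreover have "is_unit [:- coeff lbar 0:]" using b0 by (simp add: is_unit_const_poly_iff dvd_field_iff)
    ultimately show False using fnu dvd_unit_imp_unit by blast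
  qed
  have B4: "n * N \<le> degree P" if Pirr: "irreducible P" and PF: "P dvd F" for P
  proof -
    define d where "d = degree P"
    have d0: "d > 0" unfolding d_def by (rule irreducible_degree_pos[OF Pirr])
    have Ppsil: "P dvd pcompose psi l" using PF FF by simp
    have Pnu: "\<not> P dvd 1" using Pirr by (auto simp: irreducible_def)
    have PXd: "P dvd xp ^ (q ^ d) - xp" unfolding d_def q_def by (rule ff_F1[OF Pirr])
    have psiXd: "psi dvd xp ^ (q ^ d) - xp"
    proof (rule ccontr)
      assume "\<not> psi dvd xp ^ (q ^ d) - xp"
      then obtain a b where ab: "a * psi + b * (xp ^ (q ^ d) - xp) = 1" using ff_bez[OF psi_irr] by blast
      have "1 = pcompose (a * psi + b * (xp ^ (q ^ d) - xp)) l" unfolding ab by (simp add: pcompose_1)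
      also have "\<dots> = pcompose a l * pcompose psi l + pcompose b l * pcompose (xp ^ (q ^ d) - xp) l"
        by (simp add: pcompose_add pcompose_mult)
      finally have e1: "1 = \<dots>" .
      have "P dvd pcompose (xp ^ (q ^ d) - xp) l" unfolding l_def q_def XL_comm
        by (rule La_comp_dvd') (use PXd in \<open>simp add: q_def\<close>)
      hence "P dvd 1" unfolding e1 using Ppsil by simp
      thus False using Pnu by simp
    qed
    have nd: "n dvd d" using ff_F2[OF psi_irr] psiXd psideg unfolding d_def q_def by blast
    have "P dvd pcompose Xn l" using Ppsil pcompose_dvd_mono[OF psiXn, of l] by (rule dvd_trans)
    hence Plu: "P dvd pcompose l Xn" unfolding Xnl .
    have Nd: "N dvd d"
    proof (cases "P dvd Xn")
      case True
      obtain a b where ab: "a * lbar + b * (xp ^ n - 1) = 1" using ff_bez[OF irrl ndn] by blast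
      define M where "M = lin_assoc a"
      have "xp = lin_assoc (a * lbar + b * (xp ^ n - 1))" unfolding ab by (rule La_1[symmetric])
      also have "\<dots> = pcompose M l + pcompose (lin_assoc b) Xn"
        unfolding M_def l_def Xn_def q_def by (simp add: La_add La_mult La_xpow_minus1)
      finally have xpM: "xp = pcompose M l + pcompose (lin_assoc b) Xn" .
      have Mcong: "Q dvd pcompose M l - xp" if "Q dvd Xn" for Q
      proof -
        have "pcompose M l - xp = - pcompose (lin_assoc b) Xn" by (subst xpM) simp
        moreover have "Q dvd pcompose (lin_assoc b) Xn" by (rule La_comp_dvd'[OF that])
        ultimately show ?thesis by simp
      qed
      have "f dvd pcompose f (pcompose M l) - pcompose f xp" by (rule pcompose_cong[OF Mcong[OF fXn]])
      hence "f dvd pcompose f (pcompose M l) - pcompose f xp + f" by (intro dvd_add) auto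
      hence "f dvd pcompose f (pcompose M l)" by simp
      hence "psi dvd pcompose f M" by (intro A2) (simp add: pcompose_assoc)
      hence "pcompose psi l dvd pcompose f (pcompose M l)"
        using pcompose_dvd_mono[of psi "pcompose f M" l] by (simp add: pcompose_assoc)
      hence "P dvd pcompose f (pcompose M l)" using Ppsil dvd_trans by blast
      moreover have "P dvd pcompose f (pcompose M l) - pcompose f xp" by (rule pcompose_cong[OF Mcong[OF True]])
      ultimately have "P dvd pcompose f (pcompose M l) - (pcompose f (pcompose M l) - pcompose f xp)"
        by (rule dvd_diff)
      hence "P dvd f" by simp
      then obtain c where c: "f = P * c" by (elim dvdE)
      have "is_unit c" using irreducibleD[OF firr c] Pnu by blast
      hence "f dvd P" using mult_unit_dvd_iff[of c P P] c by simp
      hence "f dvd F" using PF dvd_trans by blast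
      hence "f * f dvd pcompose psi l" unfolding FF by (simp add: mult.commute)
      thus ?thesis using B3 by simp
    next
      case False
      have "lbar dvd xp ^ d - 1"
      proof (rule ccontr)
        assume a: "\<not> lbar dvd xp ^ d - 1"
        have "P dvd Xn"
        proof (rule ker_lemma[OF irrl a])
          show "P dvd pcompose (lin_assoc lbar) Xn" using Plu unfolding l_def .
          show "P dvd pcompose (lin_assoc (xp ^ d - 1)) Xn"
            unfolding comp_Xpow_minus by (rule X_all_roots) (use PXd in \<open>simp add: q_def\<close>)
        qed
        thus False using False by simp
      qed
      thus ?thesis by (rule ordlem)
    qed
    have copN: "coprime n N" using cop unfolding N_def .
    have "n * N dvd d" by (rule divides_mult[OF nd Nd copN])
    thus ?thesis unfolding d_def[symmetric] using d0 by (simp add: dvd_imp_le)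
  qed
  have F_irr: "irreducible F"
  proof (rule irreducibleI)
    show "F \<noteq> 0" by (rule F0)
    show "\<not> F dvd 1"
    proof
      assume "F dvd 1"
      hence "degree F = 0" using F0 is_unit_iff_degree by blast
      thus False using degF n1 N2 by simp
    qed
    fix A B assume AB: "F = A * B"
    have A0: "A \<noteq> 0" and B0: "B \<noteq> 0" using AB F0 by auto
    show "A dvd 1 \<or> B dvd 1"
    proof (rule disjCI)
      assume "\<not> B dvd 1"
      show "A dvd 1"
      proof (rule ccontr)
        assume "\<not> A dvd 1"
        then obtain P where P: "irreducible P" "P dvd A" using irreducible_factor_exists[OF A0] by blast
        have "P dvd F" using P(2) AB by simp
        hence "n * N \<le> degree P" using B4 P(1) by blast
        moreover have "degree P \<le> degree A" using P(2) A0 by (rule dvd_imp_degree_le)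
        moreover have "degree F = degree A + degree B" using AB A0 B0 by (simp add: degree_mult_eq)
        ultimately have "degree B = 0" using degF by simp
        hence "B dvd 1" using B0 is_unit_iff_degree by blast
        thus False using \<open>\<not> B dvd 1\<close> by simp
      qed
    qed
  qed
  show ?thesis
    using psi_irr psideg fpsil F_irr degF unfolding F_def N_def by simp
qed

end
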